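(* Let $(X,\operatorname{d})$ be a bounded, complete metric space equipped with a convex-like structure. If $X$ has finite (Lebesgue) topological covering dimension, then $X$ is second countable.
   Context: Let $\operatorname{Prob}_n$ denote the set of probability measures on $\{1,\dots,n\}$ with the $\ell^1$-metric $\|\mu-\tilde\mu\|=\sum_i|\mu(i)-\tilde\mu(i)|$, and $X^{(n)}$ the $n$-fold Cartesian product of $X$. A bounded metric space $(X,\operatorname{d})$ has a \emph{convex-like structure} if for every $n\in\mathbb N$ and $\mu\in\operatorname{Prob}_n$ there is a continuous map $\gamma_\mu\colon X^{(n)}\to X$ such that: (1) for every permutation $\sigma\in S_n$, $\gamma_\mu(x_1,\dots,x_n)=\gamma_{\mu\circ\sigma}(x_{\sigma(1)},\dots,x_{\sigma(n)})$; (2) if $x_1=x_2$ then $\gamma_\mu(x_1,x_2,\dots,x_n)=\gamma_{\tilde\mu}(x_1,x_3,\dots,x_n)$ where $\tilde\mu(1)=\mu(1)+\mu(2)$ and $\tilde\mu(j)=\mu(j+1)$ for $2\le j\le n-1$ (in particular the unique element of $\operatorname{Prob}_1$ gives the identity map); (3) if $\mu(i)=1$ then $\gamma_\mu(x_1,\dots,x_n)=x_i$; (4) there is a constant $C$ such that $\operatorname{d}(\gamma_\mu(x_1,\dots,x_n),\gamma_{\tilde\mu}(x_1,\dots,x_n))\le C\|\mu-\tilde\mu\|$ for all $x_i$, and $\operatorname{d}(\gamma_\mu(x_1,\dots,x_n),\gamma_\mu(y_1,\dots,y_n))\le\sum_i\mu(i)\operatorname{d}(x_i,y_i)$ for all $x_i,y_i$;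 (5) for all $\nu\in\operatorname{Prob}_2$, $\mu\in\operatorname{Prob}_n$, $\tilde\mu\in\operatorname{Prob}_m$ and points $x_1,\dots,x_n,\tilde x_1,\dots,\tilde x_m$, $\gamma_\nu(\gamma_\mu(x_1,\dots,x_n),\gamma_{\tilde\mu}(\tilde x_1,\dots,\tilde x_m))=\gamma_\eta(x_1,\dots,x_n,\tilde x_1,\dots,\tilde x_m)$, where $\eta(i)=\nu(1)\mu(i)$ for $1\le i\le n$ and $\eta(n+j)=\nu(2)\tilde\mu(j)$ for $1\le j\le m$. *)

theory Defs
  imports "HOL-Analysis.Analysis"
begin

(* Indices are 0-based: {1..n} of the paper is rendered as {..<n}. *)

definition Prob :: "nat \<Rightarrow> (nat \<Rightarrow> real) set" where
  "Prob n = {\<mu>. (\<forall>i<n. 0 \<le> \<mu> i) \<and> (\<Sum>i<n. \<mu> i) = 1}"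

definition l1dist :: "nat \<Rightarrow> (nat \<Rightarrow> real) \<Rightarrow> (nat \<Rightarrow> real) \<Rightarrow> real" where
  "l1dist n \<mu> \<mu>' = (\<Sum>i<n. \<bar>\<mu> i - \<mu>' i\<bar>)"

definition convex_like_structure ::
  "(nat \<Rightarrow> (nat \<Rightarrow> real) \<Rightarrow> (nat \<Rightarrow> 'a::metric_space) \<Rightarrow> 'a) \<Rightarrow> bool" where
  "convex_like_structure \<gamma> \<longleftrightarrow>
     (\<forall>n. \<forall>\<mu>\<in>Prob n.
        continuous_map (product_topology (\<lambda>_. euclidean) {..<n}) euclidean (\<gamma> n \<mu>)) \<and>
     \<comment> \<open>(1) permutation invariance\<close>
     (\<forall>n. \<forall>\<mu>\<in>Prob n. \<forall>\<sigma> x. \<sigma> permutes {..<n} \<longrightarrow>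
        \<gamma> n \<mu> x = \<gamma> n (\<mu> \<circ> \<sigma>) (x \<circ> \<sigma>)) \<and>
     \<comment> \<open>(2) merging equal points\<close>
     (\<forall>n. \<forall>\<mu>\<in>Prob n. \<forall>x. 2 \<le> n \<and> x 0 = x 1 \<longrightarrow>
        \<gamma> n \<mu> x = \<gamma> (n - 1) (\<lambda>j. if j = 0 then \<mu> 0 + \<mu> 1 else \<mu> (j + 1))
                              (\<lambda>j. if j = 0 then x 0 else x (j + 1))) \<and>
     \<comment> \<open>(3) Dirac measures\<close>
     (\<forall>n. \<forall>\<mu>\<in>Prob n. \<forall>x i. i < n \<and> \<mu> i = 1 \<longrightarrow> \<gamma> n \<mu> x = x i) \<and>
     \<comment> \<open>(4) Lipschitz conditions\<close>
     (\<exists>C. \<forall>n. \<forall>\<mu>\<in>Prob n. \<forall>\<mu>'\<in>Prob n. \<forall>x.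
        dist (\<gamma> n \<mu> x) (\<gamma> n \<mu>' x) \<le> C * l1dist n \<mu> \<mu>') \<and>
     (\<forall>n. \<forall>\<mu>\<in>Prob n. \<forall>x y.
        dist (\<gamma> n \<mu> x) (\<gamma> n \<mu> y) \<le> (\<Sum>i<n. \<mu> i * dist (x i) (y i))) \<and>
     \<comment> \<open>(5) associativity\<close>
     (\<forall>\<nu>\<in>Prob 2. \<forall>n m. \<forall>\<mu>\<in>Prob n. \<forall>\<mu>'\<in>Prob m. \<forall>x x'.
        \<gamma> 2 \<nu> (\<lambda>k. if k = 0 then \<gamma> n \<mu> x else \<gamma> m \<mu>' x') =
        \<gamma> (n + m) (\<lambda>k. if k < n then \<nu> 0 * \<mu> k else \<nu> 1 * \<mu>' (k - n))
                  (\<lambda>k. if k < n then x k else x' (k - n)))"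

definition covering_dim_le :: "'a topology \<Rightarrow> nat \<Rightarrow> bool" where
  "covering_dim_le T n \<longleftrightarrow>
     (\<forall>\<U>. finite \<U> \<and> (\<forall>U\<in>\<U>. openin T U) \<and> \<Union>\<U> = topspace T \<longrightarrow>
        (\<exists>\<V>. finite \<V> \<and> (\<forall>V\<in>\<V>. openin T V) \<and> \<Union>\<V> = topspace T \<and>
             (\<forall>V\<in>\<V>. \<exists>U\<in>\<U>. V \<subseteq> U) \<and>
             (\<forall>x\<in>topspace T. card {V\<in>\<V>. x \<in> V} \<le> n + 1)))"

definition finite_covering_dim :: "'a topology \<Rightarrow> bool" where
  "finite_covering_dim T \<longleftrightarrow> (\<exists>n. covering_dim_le T n)"

end

theory Submission
  imports Defs
begin


locale cls =
  fixes \<gamma> :: "nat \<Rightarrow> (nat \<Rightarrow> real) \<Rightarrow> (nat \<Rightarrow> 'a::metric_space) \<Rightarrow> 'a"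
  assumes cls: "convex_like_structure \<gamma>"
begin

lemmas D = cls[unfolded convex_like_structure_def]
lemmas D2 = conjunct2[OF D]
lemmas D3 = conjunct2[OF D2]
lemmas D4 = conjunct2[OF D3]
lemmas D5 = conjunct2[OF D4]
lemmas D6 = conjunct2[OF D5]

lemma perm: "\<mu> \<in> Prob n \<Longrightarrow> \<sigma> permutes {..<n} \<Longrightarrow> \<gamma> n \<mu> x = \<gamma> n (\<mu> \<circ> \<sigma>) (x \<circ> \<sigma>)"
  using conjunct1[OF D2] by blast

lemma merge: "\<mu> \<in> Prob n \<Longrightarrow> 2 \<le> n \<Longrightarrow> x 0 = x 1 \<Longrightarrow>
   \<gamma> n \<mu> x = \<gamma> (n - 1) (\<lambda>j. if j = 0 then \<mu> 0 + \<mu> 1 else \<mu> (j + 1))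
                              (\<lambda>j. if j = 0 then x 0 else x (j + 1))"
  using conjunct1[OF D3] by blast

lemma dirac: "\<mu> \<in> Prob n \<Longrightarrow> i < n \<Longrightarrow> \<mu> i = 1 \<Longrightarrow> \<gamma> n \<mu> x = x i"
  using conjunct1[OF D4] by blast

lemma lipC: "\<exists>C\<ge>0. \<forall>n. \<forall>\<mu>\<in>Prob n. \<forall>\<mu>'\<in>Prob n. \<forall>x.
        dist (\<gamma> n \<mu> x) (\<gamma> n \<mu>' x) \<le> C * l1dist n \<mu> \<mu>'"
proof -
  obtain C where C: "\<forall>n. \<forall>\<mu>\<in>Prob n. \<forall>\<mu>'\<in>Prob n. \<forall>x.
        dist (\<gamma> n \<mu> x) (\<gamma> n \<mu>' x) \<le> C * l1dist n \<mu> \<mu>'"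
    using conjunct1[OF D5] by blast
  have "l1dist n \<mu> \<mu>' \<ge> 0" for n \<mu> \<mu>' unfolding l1dist_def by (simp add: sum_nonneg)
  then have "C * l1dist n \<mu> \<mu>' \<le> max C 0 * l1dist n \<mu> \<mu>'" for n \<mu> \<mu>'
    by (simp add: mult_right_mono)
  then show ?thesis
  proof (intro exI[of _ "max C 0"] conjI allI ballI)
    fix n \<mu> \<mu>' x assume "\<mu> \<in> Prob n" "\<mu>' \<in> Prob n"
    then show "dist (\<gamma> n \<mu> x) (\<gamma> n \<mu>' x) \<le> max C 0 * l1dist n \<mu> \<mu>'"
      using C \<open>\<And>n \<mu> \<mu>'. C * l1dist n \<mu> \<mu>' \<le> max C 0 * l1dist n \<mu> \<mu>'\<close> by (meson order_trans)
  qed simp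
qed

definition C where "C = (SOME C. C \<ge> 0 \<and> (\<forall>n. \<forall>\<mu>\<in>Prob n. \<forall>\<mu>'\<in>Prob n. \<forall>x.
        dist (\<gamma> n \<mu> x) (\<gamma> n \<mu>' x) \<le> C * l1dist n \<mu> \<mu>'))"

lemma C: "C \<ge> 0" "\<mu> \<in> Prob n \<Longrightarrow> \<mu>' \<in> Prob n \<Longrightarrow> dist (\<gamma> n \<mu> x) (\<gamma> n \<mu>' x) \<le> C * l1dist n \<mu> \<mu>'"
  using someI_ex[OF lipC] unfolding C_def by blast+

lemma lipx: "\<mu> \<in> Prob n \<Longrightarrow> dist (\<gamma> n \<mu> x) (\<gamma> n \<mu> y) \<le> (\<Sum>i<n. \<mu> i * dist (x i) (y i))"
  using conjunct1[OF D6] by blast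

lemma assoc: "\<nu> \<in> Prob 2 \<Longrightarrow> \<mu> \<in> Prob n \<Longrightarrow> \<mu>' \<in> Prob m \<Longrightarrow>
        \<gamma> 2 \<nu> (\<lambda>k. if k = 0 then \<gamma> n \<mu> x else \<gamma> m \<mu>' x') =
        \<gamma> (n + m) (\<lambda>k. if k < n then \<nu> 0 * \<mu> k else \<nu> 1 * \<mu>' (k - n))
                  (\<lambda>k. if k < n then x k else x' (k - n))"
  using conjunct2[OF D6] by blast

lemma cong_x: "\<mu> \<in> Prob n \<Longrightarrow> (\<And>i. i < n \<Longrightarrow> x i = y i) \<Longrightarrow> \<gamma> n \<mu> x = \<gamma> n \<mu> y"
  using lipx[of \<mu> n x y] by simp

lemma cong_mu: "\<mu> \<in> Prob n \<Longrightarrow> \<mu>' \<in> Prob n \<Longrightarrow> (\<And>i. i < n \<Longrightarrow> \<mu> i = \<mu>' i) \<Longrightarrow> \<gamma> n \<mu> x = \<gamma> n \<mu>' x"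
  using C(2)[of \<mu> n \<mu>' x] by (simp add: l1dist_def)

definition mix :: "real \<Rightarrow> 'a \<Rightarrow> 'a \<Rightarrow> 'a" where
  "mix t u v = \<gamma> 2 (\<lambda>k. if k = 0 then t else 1 - t) (\<lambda>k. if k = 0 then u else v)"

lemma prob2: "0 \<le> t \<Longrightarrow> t \<le> 1 \<Longrightarrow> (\<lambda>k. if k = 0 then t else 1 - t) \<in> Prob 2"
  by (simp add: Prob_def numeral_2_eq_2)

lemma prob1: "(\<lambda>k. 1) \<in> Prob 1"
  by (simp add: Prob_def)

lemma single: "\<gamma> 1 (\<lambda>k. 1) (\<lambda>k. u) = u"
  using dirac[OF prob1, of 0] by simp

lemma mix1: "mix 1 u v = u"
  unfolding mix_def using dirac[OF prob2[of 1], of 0] by simp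

lemma mix0: "mix 0 u v = v"
  unfolding mix_def using dirac[OF prob2[of 0], of 1] by simp

lemma mix_lip2: "0 \<le> t \<Longrightarrow> t \<le> 1 \<Longrightarrow> dist (mix t u v) (mix t u v') \<le> (1 - t) * dist v v'"
  unfolding mix_def using lipx[OF prob2, of t "(\<lambda>k. if k = 0 then u else v)" "(\<lambda>k. if k = 0 then u else v')"]
  by (simp add: numeral_2_eq_2)

lemma mix_lip1: "0 \<le> t \<Longrightarrow> t \<le> 1 \<Longrightarrow> dist (mix t u v) (mix t u' v) \<le> t * dist u u'"
  unfolding mix_def using lipx[OF prob2, of t "(\<lambda>k. if k = 0 then u else v)" "(\<lambda>k. if k = 0 then u' else v)"]
  by (simp add: numeral_2_eq_2)

lemma mix_lipt: "0 \<le> t \<Longrightarrow> t \<le> 1 \<Longrightarrow> 0 \<le> s \<Longrightarrow> s \<le> 1 \<Longrightarrow> dist (mix t u v) (mix s u v) \<le> 2 * C * \<bar>t - s\<bar>"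
  unfolding mix_def using C(2)[OF prob2 prob2, of t s] 
  by (simp add: numeral_2_eq_2 l1dist_def abs_minus_commute algebra_simps)

lemma prob3: "a \<ge> 0 \<Longrightarrow> b \<ge> 0 \<Longrightarrow> c \<ge> 0 \<Longrightarrow> a + b + c = 1 \<Longrightarrow> \<eta> 0 = a \<Longrightarrow> \<eta> 1 = b \<Longrightarrow> \<eta> 2 = c \<Longrightarrow> \<eta> \<in> Prob 3"
  unfolding Prob_def by (simp add: numeral_3_eq_3 numeral_2_eq_2 less_Suc_eq)

lemma mix3: 
  assumes "0 \<le> \<alpha>" "\<alpha> \<le> 1" "0 \<le> t" "t \<le> 1"
  shows "mix \<alpha> x (mix t y z) = \<gamma> 3 (\<lambda>k. if k = 0 then \<alpha> else if k = 1 then (1-\<alpha>)*t else (1-\<alpha>)*(1-t))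
             (\<lambda>k. if k = 0 then x else if k = 1 then y else z)"
proof -
  have h: "(1-\<alpha>)*(1-t) \<ge> 0" "\<alpha>*t \<le> t" using assms by (auto simp: mult_left_le_one_le)
  have "\<gamma> 2 (\<lambda>k. if k = 0 then \<alpha> else 1 - \<alpha>) (\<lambda>k. if k = 0 then \<gamma> 1 (\<lambda>k. 1) (\<lambda>k. x) else
     \<gamma> 2 (\<lambda>k. if k = 0 then t else 1 - t) (\<lambda>k. if k = 0 then y else z)) =
    \<gamma> (1 + 2) (\<lambda>k. if k < 1 then (if (0::nat) = 0 then \<alpha> else 1 - \<alpha>) * 1 else (if (1::nat) = 0 then \<alpha> else 1 - \<alpha>) * (if k - 1 = 0 then t else 1 - t))
       (\<lambda>k. if k < 1 then x else (if k - 1 = 0 then y else z))"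
    by (rule assoc[OF prob2 prob1 prob2]) (use assms in auto)
  moreover have "\<gamma> 2 (\<lambda>k. if k = 0 then \<alpha> else 1 - \<alpha>) (\<lambda>k. if k = 0 then \<gamma> 1 (\<lambda>k. 1) (\<lambda>k. x) else
     \<gamma> 2 (\<lambda>k. if k = 0 then t else 1 - t) (\<lambda>k. if k = 0 then y else z)) = mix \<alpha> x (mix t y z)"
    by (simp only: single mix_def)
  moreover have "\<gamma> (1 + 2) (\<lambda>k. if k < 1 then (if (0::nat) = 0 then \<alpha> else 1 - \<alpha>) * 1 else (if (1::nat) = 0 then \<alpha> else 1 - \<alpha>) * (if k - 1 = 0 then t else 1 - t))
       (\<lambda>k. if k < 1 then x else (if k - 1 = 0 then y else z)) = 
     \<gamma> 3 (\<lambda>k. if k = 0 then \<alpha> else if k = 1 then (1-\<alpha>)*t else (1-\<alpha>)*(1-t))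
             (\<lambda>k. if k = 0 then x else if k = 1 then y else z)"
  proof -
    have e: "(1::nat) + 2 = 3" by simp
    show ?thesis unfolding e
      apply (rule trans[OF cong_x cong_mu])
         apply (rule prob3[of \<alpha> "(1-\<alpha>)*t" "(1-\<alpha>)*(1-t)"]; use assms h in \<open>auto simp: algebra_simps\<close>)
        apply (auto simp: numeral_3_eq_3 less_Suc_eq)[1]
       apply (rule prob3[of \<alpha> "(1-\<alpha>)*t" "(1-\<alpha>)*(1-t)"]; use assms h in \<open>auto simp: algebra_simps\<close>)
      apply (rule prob3[of \<alpha> "(1-\<alpha>)*t" "(1-\<alpha>)*(1-t)"]; use assms h in \<open>auto simp: algebra_simps\<close>)
      apply (auto simp: numeral_3_eq_3 less_Suc_eq)
      done
  qed
  ultimately show ?thesis by simp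
qed

lemma mix_same:
  assumes "0 \<le> \<alpha>" "\<alpha> \<le> 1" "0 \<le> t" "t \<le> 1"
  shows "mix \<alpha> x (mix t x z) = mix (\<alpha> + (1-\<alpha>)*t) x z"
proof -
  have h: "(1-\<alpha>)*(1-t) \<ge> 0" "\<alpha>*t \<le> t" using assms by (auto simp: mult_left_le_one_le)
  define \<eta> where "\<eta> = (\<lambda>k::nat. if k = 0 then \<alpha> else if k = 1 then (1-\<alpha>)*t else (1-\<alpha>)*(1-t))"
  define Y where "Y = (\<lambda>k::nat. if k = 0 then x else if k = 1 then x else z)"
  have P: "\<eta> \<in> Prob 3"
    by (rule prob3[of \<alpha> "(1-\<alpha>)*t" "(1-\<alpha>)*(1-t)"]; use assms h in \<open>auto simp: algebra_simps \<eta>_def\<close>)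
  have "mix \<alpha> x (mix t x z) = \<gamma> 3 \<eta> Y" unfolding \<eta>_def Y_def by (rule mix3[OF assms])
  also have "\<dots> = \<gamma> (3 - 1) (\<lambda>j. if j = 0 then \<eta> 0 + \<eta> 1 else \<eta> (j + 1))
                              (\<lambda>j. if j = 0 then Y 0 else Y (j + 1))"
    by (rule merge[OF P]) (auto simp: Y_def)
  also have "\<dots> = mix (\<alpha> + (1-\<alpha>)*t) x z"
    unfolding mix_def numeral_3_eq_3 diff_Suc_1 numeral_2_eq_2[symmetric]
    apply (rule trans[OF cong_x cong_mu])
       apply (simp add: Prob_def numeral_2_eq_2 \<eta>_def; use assms h in \<open>auto simp: algebra_simps\<close>)
      apply (auto simp: numeral_2_eq_2 less_Suc_eq Y_def)[1]
     apply (simp add: Prob_def numeral_2_eq_2 \<eta>_def; use assms h in \<open>auto simp: algebra_simps\<close>)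
     apply (rule prob2; use assms h in \<open>auto simp: algebra_simps\<close>)
    apply (auto simp: numeral_2_eq_2 less_Suc_eq \<eta>_def algebra_simps)
    done
  finally show ?thesis .
qed

lemma mix_swap:
  assumes "0 \<le> \<alpha>" "\<alpha> \<le> 1" "0 \<le> t" "t \<le> 1" "\<alpha> = (1 - \<alpha>) * t"
  shows "mix \<alpha> x (mix t y z) = mix \<alpha> y (mix t x z)"
proof -
  have h: "(1-\<alpha>)*(1-t) \<ge> 0" "\<alpha>*t \<le> t" using assms by (auto simp: mult_left_le_one_le)
  define \<eta> where "\<eta> = (\<lambda>k::nat. if k = 0 then \<alpha> else if k = 1 then (1-\<alpha>)*t else (1-\<alpha>)*(1-t))"
  define X where "X = (\<lambda>k::nat. if k = 0 then x else if k = 1 then y else z)"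
  define Y where "Y = (\<lambda>k::nat. if k = 0 then y else if k = 1 then x else z)"
  have P: "\<eta> \<in> Prob 3"
    by (rule prob3[of \<alpha> "(1-\<alpha>)*t" "(1-\<alpha>)*(1-t)"]; use assms h in \<open>auto simp: algebra_simps \<eta>_def\<close>)
  have s: "Transposition.transpose 0 1 permutes {..<3::nat}" by (rule permutes_swap_id) auto
  have "mix \<alpha> x (mix t y z) = \<gamma> 3 \<eta> X" unfolding \<eta>_def X_def by (rule mix3[OF assms(1-4)])
  also have "\<dots> = \<gamma> 3 (\<eta> \<circ> Transposition.transpose 0 1) (X \<circ> Transposition.transpose 0 1)" by (rule perm[OF P s])
  also have "\<dots> = \<gamma> 3 \<eta> Y"
    apply (rule trans[OF cong_x cong_mu])
       apply (rule prob3[of \<alpha> "(1-\<alpha>)*t" "(1-\<alpha>)*(1-t)"]; use assms h in \<open>auto simp: algebra_simps \<eta>_def transpose_def\<close>)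
      apply (auto simp: numeral_3_eq_3 less_Suc_eq X_def Y_def transpose_def)[1]
     apply (rule prob3[of \<alpha> "(1-\<alpha>)*t" "(1-\<alpha>)*(1-t)"]; use assms h in \<open>auto simp: algebra_simps \<eta>_def transpose_def\<close>)
    apply (rule P)
    apply (auto simp: numeral_3_eq_3 less_Suc_eq \<eta>_def transpose_def)
    using assms(5) by metis+
  also have "\<dots> = mix \<alpha> y (mix t x z)" unfolding \<eta>_def Y_def by (rule mix3[OF assms(1-4), symmetric])
  finally show ?thesis .
qed

lemma geom_le:
  fixes a b c \<rho> :: real
  assumes "\<And>k. a \<le> b + c * \<rho> ^ k" "0 \<le> \<rho>" "\<rho> < 1"
  shows "a \<le> b"
proof -
  have "(\<lambda>k. b + c * \<rho> ^ k) \<longlonglongrightarrow> b + c * 0"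
    by (intro tendsto_intros LIMSEQ_power_zero) (use assms in auto)
  then show ?thesis using assms(1) by (auto intro: LIMSEQ_le_const)
qed

lemma cancel_step:
  assumes "0 < t" "t \<le> 1"
  shows "dist (mix (2*t/(1+t)) x z) (mix (2*t/(1+t)) y z) \<le> 2/(1+t) * dist (mix t x z) (mix t y z)"
proof -
  define \<alpha> where "\<alpha> = t / (1 + t)"
  have a0: "0 \<le> \<alpha>" "\<alpha> \<le> 1" using assms by (auto simp: \<alpha>_def)
  have a1: "\<alpha> = (1 - \<alpha>) * t" using assms by (simp add: \<alpha>_def field_simps)
  have a2: "\<alpha> + (1 - \<alpha>) * t = 2*t/(1+t)"
  proof -
    have "\<alpha> + (1 - \<alpha>) * t = 2 * \<alpha>" using a1 by simp
    then show ?thesis by (simp add: \<alpha>_def)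
  qed
  have a3: "1 - \<alpha> = 1/(1+t)" using assms by (simp add: \<alpha>_def field_simps)
  define u where "u = mix t x z"
  define v where "v = mix t y z"
  have A: "mix \<alpha> x u = mix (2*t/(1+t)) x z" unfolding u_def using mix_same[OF a0 _ assms(2)] assms a2 by simp
  have B: "mix \<alpha> y v = mix (2*t/(1+t)) y z" unfolding v_def using mix_same[OF a0 _ assms(2)] assms a2 by simp
  have P: "mix \<alpha> x v = mix \<alpha> y u" unfolding u_def v_def using mix_swap[OF a0 _ assms(2) a1] assms by simp
  have "dist (mix \<alpha> x u) (mix \<alpha> y v) \<le> dist (mix \<alpha> x u) (mix \<alpha> x v) + dist (mix \<alpha> x v) (mix \<alpha> y v)"
    by (rule dist_triangle)
  also have "\<dots> \<le> (1 - \<alpha>) * dist u v + (1 - \<alpha>) * dist u v"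
    using mix_lip2[OF a0, of x u v] mix_lip2[OF a0, of y u v] P by simp
  finally show ?thesis using A B a3 unfolding u_def v_def by (simp add: field_simps)
qed

lemma cancel:
  assumes "0 < t" "t \<le> 1"
  shows "t * dist x y \<le> dist (mix t x z) (mix t y z)"
proof -
  define E where "E s = dist (mix s x z) (mix s y z)" for s
  define ts where "ts = rec_nat t (\<lambda>k s. 2 * s / (1 + s))"
  have ts0: "ts 0 = t" and tsS: "ts (Suc k) = 2 * ts k / (1 + ts k)" for k by (simp_all add: ts_def)
  define \<rho> where "\<rho> = 1 / (1 + t)"
  have inv: "t \<le> ts k \<and> ts k \<le> 1 \<and> E (ts k) / ts k \<le> E t / t \<and> 1 - ts k \<le> (1 - t) * \<rho> ^ k" for k
  proof (induction k)
    case 0 then show ?case using assms by (simp add: ts0)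
  next
    case (Suc k)
    let ?s = "ts k"
    have s: "t \<le> ?s" "?s \<le> 1" "0 < ?s" using Suc assms by auto
    have "t * ?s \<le> ?s * ?s" "?s * ?s \<le> ?s" using s by (auto intro: mult_right_mono mult_left_le_one_le)
    then have "t + t * ?s \<le> ?s * 2" using s by linarith
    then have "t \<le> 2 * ?s / (1 + ?s)" using s by (simp add: field_simps)
    moreover have "2 * ?s / (1 + ?s) \<le> 1" using s by (simp add: field_simps)
    moreover have "E (2 * ?s / (1 + ?s)) / (2 * ?s / (1 + ?s)) \<le> E ?s / ?s"
    proof -
      have "E (2 * ?s / (1 + ?s)) \<le> 2 / (1 + ?s) * E ?s" unfolding E_def by (rule cancel_step) (use s in auto)
      then have "E (2 * ?s / (1 + ?s)) / (2 * ?s / (1 + ?s)) \<le> (2 / (1 + ?s) * E ?s) / (2 * ?s / (1 + ?s))"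
        by (rule divide_right_mono) (use s in auto)
      also have "\<dots> = E ?s / ?s"
      proof -
        have "1 + ?s \<noteq> 0" using s by simp
        then show ?thesis using s by (simp add: divide_simps)
      qed
      finally show ?thesis .
    qed
    moreover have "1 - 2 * ?s / (1 + ?s) \<le> (1 - t) * \<rho> ^ Suc k"
    proof -
      have "1 - 2 * ?s / (1 + ?s) = (1 - ?s) / (1 + ?s)" using s by (simp add: field_simps)
      also have "\<dots> \<le> (1 - ?s) / (1 + t)" using s assms by (intro divide_left_mono) (auto intro: mult_pos_pos)
      also have "\<dots> \<le> (1 - t) * \<rho> ^ k / (1 + t)" using Suc s assms by (intro divide_right_mono) auto
      also have "\<dots> = (1 - t) * \<rho> ^ Suc k" by (simp add: \<rho>_def)
      finally show ?thesis .
    qed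
    ultimately show ?case using Suc by (simp add: tsS)
  qed
  have Elip: "\<bar>E 1 - E s\<bar> \<le> 4 * C * (1 - s)" if "0 \<le> s" "s \<le> 1" for s
  proof -
    have "dist (mix 1 x z) (mix s x z) \<le> 2 * C * \<bar>1 - s\<bar>" "dist (mix 1 y z) (mix s y z) \<le> 2 * C * \<bar>1 - s\<bar>"
      using mix_lipt[of 1 s x z] mix_lipt[of 1 s y z] that by auto
    moreover have "\<bar>E 1 - E s\<bar> \<le> dist (mix 1 x z) (mix s x z) + dist (mix 1 y z) (mix s y z)"
      unfolding E_def using dist_triangle_le dist_commute 
      by (smt (verit, best) dist_triangle)
    ultimately show ?thesis using that by auto
  qed
  have "dist x y \<le> E t / t + (4 * C * (1 - t)) * \<rho> ^ k" for k
  proof -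
    have k: "t \<le> ts k" "ts k \<le> 1" "E (ts k) / ts k \<le> E t / t" "1 - ts k \<le> (1 - t) * \<rho> ^ k"
      using inv[of k] by auto
    have "dist x y = E 1" by (simp add: E_def mix1)
    also have "\<dots> \<le> E (ts k) + 4 * C * (1 - ts k)" using Elip[of "ts k"] k assms by auto
    also have "E (ts k) \<le> E t / t"
    proof -
      have "E (ts k) \<le> ts k * (E t / t)" using k assms by (simp add: field_simps)
      also have "\<dots> \<le> E t / t" using k assms by (intro mult_left_le_one_le) (auto simp: E_def)
      finally show ?thesis .
    qed
    also have "4 * C * (1 - ts k) \<le> 4 * C * ((1 - t) * \<rho> ^ k)" using k C(1) by (intro mult_left_mono) auto
    finally show ?thesis by (simp add: algebra_simps)
  qed
  then have "dist x y \<le> E t / t" by (rule geom_le) (use assms in \<open>auto simp: \<rho>_def\<close>)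
  then show ?thesis using assms by (simp add: E_def field_simps)
qed

end


lemma sepL:
  fixes T :: "'a::metric_space set" and h :: "'a \<Rightarrow> nat \<Rightarrow> real"
  assumes H: "\<And>w w'. w \<in> T \<Longrightarrow> w' \<in> T \<Longrightarrow> dist w w' \<le> L * (\<Sum>i<M. \<bar>h w i - h w' i\<bar>)"
  shows "\<exists>D. countable D \<and> T \<subseteq> closure D"
proof -
  define Q :: "(nat \<Rightarrow> real) set" where "Q = PiE {..<M} (\<lambda>_. \<rat>)"
  have cQ: "countable Q" unfolding Q_def by (intro countable_PiE) (auto simp: countable_rat)
  define ok where "ok (q :: nat \<Rightarrow> real) (l::nat) w \<longleftrightarrow> w \<in> T \<and> (\<forall>i<M. \<bar>h w i - q i\<bar> < 1 / Suc l)" for q l w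
  define c where "c q l = (SOME w. ok q l w)" for q l
  define D where "D = (\<lambda>(q, l). c q l) ` {(q, l). q \<in> Q \<and> (\<exists>w. ok q l w)}"
  have "countable D" unfolding D_def
    by (rule countable_image, rule countable_subset[of _ "Q \<times> UNIV"]) (use cQ in auto)
  moreover have "T \<subseteq> closure D"
  proof
    fix w assume w: "w \<in> T"
    show "w \<in> closure D" unfolding closure_approachable
    proof (intro allI impI)
      fix e :: real assume e: "e > 0"
      obtain l :: nat where l: "(max L 0 * (2 * M)) / e < Suc l"
        using reals_Archimedean2 by (metis less_trans of_nat_Suc lessI of_nat_less_iff)
      have lb: "max L 0 * (2 * M) / Suc l < e"
        using l e by (simp add: field_simps)
      have "\<exists>r\<in>\<rat>. h w i - 1 / Suc l < r \<and> r < h w i + 1 / Suc l" for i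
        by (rule Rats_dense_in_real) simp
      then have "\<forall>i. \<exists>r. r \<in> \<rat> \<and> \<bar>h w i - r\<bar> < 1 / Suc l"
        by (metis abs_diff_less_iff add.commute diff_less_eq less_diff_eq)
      then obtain r where "\<forall>i. r i \<in> \<rat> \<and> \<bar>h w i - r i\<bar> < 1 / Suc l"
        by (metis choice)
      then have r: "\<And>i. r i \<in> \<rat>" "\<And>i. \<bar>h w i - r i\<bar> < 1 / Suc l" by auto
      define q where "q = restrict r {..<M}"
      have q: "q \<in> Q" unfolding q_def Q_def using r by auto
      have okw: "ok q l w" unfolding ok_def q_def using r w by auto
      then have okc: "ok q l (c q l)" unfolding c_def by (rule someI)
      have cD: "c q l \<in> D" unfolding D_def using q okw by auto
      have "dist (c q l) w \<le> L * (\<Sum>i<M. \<bar>h (c q l) i - h w i\<bar>)"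
        using H okc w unfolding ok_def by blast
      also have "\<dots> \<le> max L 0 * (\<Sum>i<M. \<bar>h (c q l) i - h w i\<bar>)"
        by (intro mult_right_mono) (auto intro: sum_nonneg)
      also have "(\<Sum>i<M. \<bar>h (c q l) i - h w i\<bar>) \<le> (\<Sum>i<M. 2 / Suc l)"
      proof (rule sum_mono)
        fix i assume "i \<in> {..<M}"
        then have "\<bar>h (c q l) i - q i\<bar> < 1 / Suc l" "\<bar>h w i - q i\<bar> < 1 / Suc l"
          using okc okw unfolding ok_def by auto
        then show "\<bar>h (c q l) i - h w i\<bar> \<le> 2 / Suc l" by linarith
      qed
      also have "max L 0 * (\<Sum>i<M. 2 / Suc l) = max L 0 * (2 * M) / Suc l" by simp
      finally have "dist (c q l) w < e" using lb by (auto simp: mult_left_mono)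
      then show "\<exists>y\<in>D. dist y w < e" using cD by blast
    qed
  qed
  ultimately show ?thesis by blast
qed

lemma sep_imp_second_countable:
  fixes D :: "'a::metric_space set"
  assumes "countable D" "closure D = UNIV"
  shows "second_countable (euclidean :: 'a topology)"
  unfolding second_countable_def
proof (intro exI conjI allI impI ballI)
  let ?B = "(\<lambda>(d, m). ball d (1 / Suc m)) ` (D \<times> (UNIV :: nat set))"
  show "countable ?B" using assms(1) by auto
  show "openin euclidean V" if "V \<in> ?B" for V using that by auto
  fix U and x :: 'a assume Ux: "openin euclidean U \<and> x \<in> U"
  then obtain e where e: "e > 0" "ball x e \<subseteq> U" by (auto simp: open_contains_ball)
  obtain m :: nat where m: "1 / Suc m < e / 2"
    using e by (metis half_gt_zero_iff nat_approx_posE)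
  have "x \<in> closure D" using assms by auto
  then obtain d where d: "d \<in> D" "dist d x < 1 / Suc m"
    unfolding closure_approachable by (metis of_nat_Suc of_nat_0_less_iff zero_less_Suc zero_less_divide_1_iff)
  have "ball d (1 / Suc m) \<subseteq> ball x e"
  proof
    fix y assume "y \<in> ball d (1 / Suc m)"
    then have "dist d y < 1 / Suc m" by simp
    then show "y \<in> ball x e" using d m dist_triangle[of x y d] by (simp add: dist_commute)
  qed
  then show "\<exists>V\<in>?B. x \<in> V \<and> V \<subseteq> U"
    using d e by (intro bexI[of _ "ball d (1 / Suc m)"]) (auto simp: dist_commute)
qed



definition cube :: "(nat \<Rightarrow> real) set" where
  "cube = {x. \<forall>k. 0 \<le> x k \<and> x k \<le> 1}"

definition wt :: "nat \<Rightarrow> nat \<Rightarrow> (nat \<Rightarrow> real) \<Rightarrow> real" where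
  "wt N i x = (\<Prod>k\<in>{i..<N}. 1 - x k) * (if i = 0 then 1 else x (i - 1))"

lemma wt_Suc: "i \<le> N \<Longrightarrow> wt (Suc N) i x = (1 - x N) * wt N i x"
  by (simp add: wt_def)

context cls
begin

primrec Ep :: "(nat \<Rightarrow> 'a) \<Rightarrow> nat \<Rightarrow> (nat \<Rightarrow> real) \<Rightarrow> 'a" where
  "Ep a 0 x = a 0"
| "Ep a (Suc k) x = mix (x k) (a (Suc k)) (Ep a k x)"

definition Sset :: "'a set \<Rightarrow> 'a set" where
  "Sset H = {w. \<exists>t. 0 < t \<and> t \<le> 1 \<and> (\<exists>p\<in>H. \<exists>q\<in>H. mix t w p = q)}"

definition Fset :: "(nat \<Rightarrow> 'a) \<Rightarrow> nat \<Rightarrow> nat \<Rightarrow> 'a set" where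
  "Fset a N i = Ep a N ` {x \<in> cube. wt N i x = 0}"

lemma Ep_cong: "(\<And>i. i \<le> k \<Longrightarrow> a i = b i) \<Longrightarrow> Ep a k x = Ep b k x"
  by (induction k) auto

lemma mix_lip_both: "0 \<le> s \<Longrightarrow> s \<le> 1 \<Longrightarrow> 0 \<le> s' \<Longrightarrow> s' \<le> 1 \<Longrightarrow>
  dist (mix s u p) (mix s' u p') \<le> dist p p' + 2 * C * \<bar>s - s'\<bar>"
proof -
  assume s: "0 \<le> s" "s \<le> 1" "0 \<le> s'" "s' \<le> 1"
  have "dist (mix s u p) (mix s' u p') \<le> dist (mix s u p) (mix s u p') + dist (mix s u p') (mix s' u p')"
    by (rule dist_triangle)
  also have "\<dots> \<le> (1 - s) * dist p p' + 2 * C * \<bar>s - s'\<bar>"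
    using mix_lip2[of s u p p'] mix_lipt[of s s' u p'] s by (intro add_mono) auto
  also have "\<dots> \<le> dist p p' + 2 * C * \<bar>s - s'\<bar>"
    using s by (simp add: mult_left_le_one_le)
  finally show ?thesis .
qed

lemma Ep_lip: "x \<in> cube \<Longrightarrow> y \<in> cube \<Longrightarrow> dist (Ep a k x) (Ep a k y) \<le> 2 * C * (\<Sum>i<k. \<bar>x i - y i\<bar>)"
proof (induction k)
  case 0 then show ?case by simp
next
  case (Suc k)
  have "dist (Ep a (Suc k) x) (Ep a (Suc k) y) \<le> dist (Ep a k x) (Ep a k y) + 2 * C * \<bar>x k - y k\<bar>"
    using Suc.prems by (simp, intro mix_lip_both) (auto simp: cube_def)
  also have "\<dots> \<le> 2 * C * (\<Sum>i<k. \<bar>x i - y i\<bar>) + 2 * C * \<bar>x k - y k\<bar>"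
    using Suc by simp
  finally show ?case by (simp add: algebra_simps)
qed

lemma F_empty:
  assumes "\<And>k. 1 \<le> k \<Longrightarrow> k \<le> N \<Longrightarrow> a k \<notin> Sset (Ep a (k - 1) ` cube)"
  shows "\<exists>i\<le>N. y \<notin> Fset a N i"
  using assms
proof (induction N arbitrary: y)
  case 0
  have "wt 0 0 x \<noteq> 0" for x by (simp add: wt_def)
  then show ?case by (auto simp: Fset_def)
next
  case (Suc N)
  show ?case
  proof (rule ccontr)
    assume "\<not> ?thesis"
    then have all: "\<And>i. i \<le> Suc N \<Longrightarrow> y \<in> Fset a (Suc N) i" by auto
    from all[of "Suc N"] obtain x where x: "x \<in> cube" "wt (Suc N) (Suc N) x = 0" "y = Ep a (Suc N) x"
      by (auto simp: Fset_def)
    have "x N = 0" using x(2) by (simp add: wt_def)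
    then have yH: "y \<in> Ep a N ` cube" using x by (simp add: mix0)
    have "y \<in> Fset a N i" if i: "i \<le> N" for i
    proof -
      from all[of i] i obtain x' where x': "x' \<in> cube" "wt (Suc N) i x' = 0" "y = Ep a (Suc N) x'"
        by (auto simp: Fset_def)
      have t: "0 \<le> x' N" "x' N \<le> 1" using x'(1) by (auto simp: cube_def)
      have "x' N = 0"
      proof (rule ccontr)
        assume "x' N \<noteq> 0"
        then have "a (Suc N) \<in> Sset (Ep a N ` cube)"
          unfolding Sset_def using t x' yH by (auto intro!: exI[of _ "x' N"])
        then show False using Suc.prems[of "Suc N"] by simp
      qed
      then show ?thesis using x' i by (auto simp: Fset_def wt_Suc mix0)
    qed
    moreover have "\<And>k. 1 \<le> k \<Longrightarrow> k \<le> N \<Longrightarrow> a k \<notin> Sset (Ep a (k - 1) ` cube)"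
      using Suc.prems by auto
    ultimately show False using Suc.IH by blast
  qed
qed

lemma S_sep: "\<exists>D. countable D \<and> Sset (Ep a k ` cube) \<subseteq> closure D"
proof -
  define T where "T j = {w. \<exists>t. 1 / Suc j \<le> t \<and> t \<le> 1 \<and> (\<exists>x\<in>cube. \<exists>x'\<in>cube. mix t w (Ep a k x) = Ep a k x')}" for j :: nat
  have "\<exists>D. countable D \<and> T j \<subseteq> closure D" for j
  proof -
    define par where "par w = (SOME (t, x, x'). 1 / Suc j \<le> t \<and> t \<le> 1 \<and> x \<in> cube \<and> x' \<in> cube \<and> mix t w (Ep a k x) = Ep a k x')" for w
    have par: "1 / Suc j \<le> fst (par w) \<and> fst (par w) \<le> 1 \<and> fst (snd (par w)) \<in> cube \<and> snd (snd (par w)) \<in> cube \<and>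
       mix (fst (par w)) w (Ep a k (fst (snd (par w)))) = Ep a k (snd (snd (par w)))" if "w \<in> T j" for w
    proof -
      from that obtain t x x' where "1 / Suc j \<le> t \<and> t \<le> 1 \<and> x \<in> cube \<and> x' \<in> cube \<and> mix t w (Ep a k x) = Ep a k x'"
        unfolding T_def by blast
      then have "\<exists>p. (case p of (t, x, x') \<Rightarrow> 1 / Suc j \<le> t \<and> t \<le> 1 \<and> x \<in> cube \<and> x' \<in> cube \<and> mix t w (Ep a k x) = Ep a k x')"
        by (intro exI[of _ "(t, x, x')"]) simp
      then have "case par w of (t, x, x') \<Rightarrow> 1 / Suc j \<le> t \<and> t \<le> 1 \<and> x \<in> cube \<and> x' \<in> cube \<and> mix t w (Ep a k x) = Ep a k x'"
        unfolding par_def by (rule someI_ex)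
      then show ?thesis by (auto split: prod.splits)
    qed
    define h where "h w i = (if i = 0 then fst (par w) else if i \<le> k then fst (snd (par w)) (i - 1)
        else snd (snd (par w)) (i - 1 - k))" for w i
    have "dist w w' \<le> (Suc j * (6 * C)) * (\<Sum>i<Suc (k + k). \<bar>h w i - h w' i\<bar>)" if w: "w \<in> T j" "w' \<in> T j" for w w'
    proof -
      obtain t x x' where p: "par w = (t, x, x')" by (cases "par w") auto
      obtain s y y' where p': "par w' = (s, y, y')" by (cases "par w'") auto
      have P: "1 / Suc j \<le> t" "t \<le> 1" "x \<in> cube" "x' \<in> cube" "mix t w (Ep a k x) = Ep a k x'"
        using par[OF w(1)] p by auto
      have P': "1 / Suc j \<le> s" "s \<le> 1" "y \<in> cube" "y' \<in> cube" "mix s w' (Ep a k y) = Ep a k y'"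
        using par[OF w(2)] p' by auto
      have t0: "0 < t" "0 < s" using P(1) P'(1) by (auto intro: less_le_trans[rotated])
      define \<Sigma> where "\<Sigma> = (\<Sum>i<Suc (k + k). \<bar>h w i - h w' i\<bar>)"
      have hs0: "\<bar>t - s\<bar> \<le> \<Sigma>"
      proof -
        have "\<bar>t - s\<bar> = \<bar>h w 0 - h w' 0\<bar>" by (simp add: h_def p p')
        also have "\<dots> \<le> \<Sigma>" unfolding \<Sigma>_def by (rule member_le_sum) auto
        finally show ?thesis .
      qed
      have hs1: "(\<Sum>i<k. \<bar>x i - y i\<bar>) \<le> \<Sigma>"
      proof -
        have "(\<Sum>i<k. \<bar>x i - y i\<bar>) = (\<Sum>i\<in>Suc ` {..<k}. \<bar>h w i - h w' i\<bar>)"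
          by (subst sum.reindex) (auto simp: h_def p p')
        also have "\<dots> \<le> \<Sigma>" unfolding \<Sigma>_def by (rule sum_mono2) auto
        finally show ?thesis .
      qed
      have hs2: "(\<Sum>i<k. \<bar>x' i - y' i\<bar>) \<le> \<Sigma>"
      proof -
        have "(\<Sum>i<k. \<bar>x' i - y' i\<bar>) = (\<Sum>i\<in>(\<lambda>i. Suc (k + i)) ` {..<k}. \<bar>h w i - h w' i\<bar>)"
          by (subst sum.reindex) (auto simp: h_def p p' inj_on_def)
        also have "\<dots> \<le> \<Sigma>" unfolding \<Sigma>_def by (rule sum_mono2) auto
        finally show ?thesis .
      qed
      have "t * dist w w' \<le> dist (mix t w (Ep a k x)) (mix t w' (Ep a k x))"
        by (rule cancel) (use t0 P in auto)
      also have "\<dots> \<le> dist (Ep a k x') (Ep a k y') + dist (Ep a k y') (mix t w' (Ep a k x))"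
        using P(5) dist_triangle by metis
      also have "dist (Ep a k y') (mix t w' (Ep a k x)) \<le> dist (Ep a k y) (Ep a k x) + 2 * C * \<bar>s - t\<bar>"
        using P'(5) mix_lip_both[of s t w' "Ep a k y" "Ep a k x"] t0 P P' by auto
      also have "dist (Ep a k x') (Ep a k y') \<le> 2 * C * \<Sigma>"
      proof -
        have "2 * C * (\<Sum>i<k. \<bar>x' i - y' i\<bar>) \<le> 2 * C * \<Sigma>" using hs2 C(1) by (intro mult_left_mono) auto
        then show ?thesis using Ep_lip[OF P(4) P'(4), of a k] by linarith
      qed
      also have "dist (Ep a k y) (Ep a k x) \<le> 2 * C * \<Sigma>"
      proof -
        have "(\<Sum>i<k. \<bar>y i - x i\<bar>) \<le> \<Sigma>" using hs1 by (simp add: abs_minus_commute)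
        then have "2 * C * (\<Sum>i<k. \<bar>y i - x i\<bar>) \<le> 2 * C * \<Sigma>" using C(1) by (intro mult_left_mono) auto
        then show ?thesis using Ep_lip[OF P'(3) P(3), of a k] by linarith
      qed
      also have "2 * C * \<bar>s - t\<bar> \<le> 2 * C * \<Sigma>"
        using hs0 C(1) by (simp add: abs_minus_commute mult_left_mono)
      finally have A: "t * dist w w' \<le> 6 * C * \<Sigma>" by (simp add: algebra_simps)
      have "dist w w' \<le> Suc j * (t * dist w w')"
      proof -
        have "1 \<le> Suc j * t" using P(1) by (simp add: field_simps)
        then have "1 * dist w w' \<le> (Suc j * t) * dist w w'" by (intro mult_right_mono) auto
        then show ?thesis by (simp add: mult.assoc)
      qed
      also have "\<dots> \<le> Suc j * (6 * C * \<Sigma>)" using A by (intro mult_left_mono) auto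
      finally show ?thesis unfolding \<Sigma>_def by (simp add: algebra_simps)
    qed
    then show ?thesis by (rule sepL)
  qed
  then obtain D where D: "\<And>j. countable (D j) \<and> T j \<subseteq> closure (D j)" by metis
  have "Sset (Ep a k ` cube) \<subseteq> closure (\<Union>j. D j)"
  proof
    fix w assume "w \<in> Sset (Ep a k ` cube)"
    then obtain t x x' where tx: "0 < t" "t \<le> 1" "x \<in> cube" "x' \<in> cube" "mix t w (Ep a k x) = Ep a k x'"
      unfolding Sset_def by blast
    obtain j :: nat where "1 / Suc j < t" using tx(1) nat_approx_posE by metis
    then have "w \<in> T j" unfolding T_def using tx by (auto intro!: exI[of _ t])
    then have "w \<in> closure (D j)" using D by blast
    then show "w \<in> closure (\<Union>j. D j)" using closure_mono[of "D j" "\<Union>j. D j"] by blast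
  qed
  moreover have "countable (\<Union>j. D j)" using D by auto
  ultimately show ?thesis by blast
qed

end


lemma lip_cont:
  fixes f :: "(nat \<Rightarrow> real) \<Rightarrow> 'b::metric_space"
  assumes H: "\<And>x y. x \<in> S \<Longrightarrow> y \<in> S \<Longrightarrow> dist (f x) (f y) \<le> L * (\<Sum>i<M. \<bar>x i - y i\<bar>)"
  shows "continuous_on S f"
  unfolding continuous_on_def
proof (intro ballI)
  fix x assume x: "x \<in> S"
  define g where "g y = (\<Sum>i<M. \<bar>y i - x i\<bar>)" for y :: "nat \<Rightarrow> real"
  have "continuous_on UNIV g" unfolding g_def
    by (intro continuous_intros continuous_on_product_coordinates)
  then have "(g \<longlongrightarrow> g x) (at x within S)"
    by (meson UNIV_I continuous_on_def tendsto_within_subset subset_UNIV)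
  then have g0: "(g \<longlongrightarrow> 0) (at x within S)" by (simp add: g_def)
  show "(f \<longlongrightarrow> f x) (at x within S)"
    unfolding tendsto_iff
  proof (intro allI impI)
    fix e :: real assume e: "e > 0"
    have "eventually (\<lambda>y. g y < e / (\<bar>L\<bar> + 1)) (at x within S)"
      using g0 e by (intro order_tendstoD(2)) auto
    moreover have "eventually (\<lambda>y. y \<in> S) (at x within S)"
      by (simp add: eventually_at_filter)
    ultimately show "eventually (\<lambda>y. dist (f y) (f x) < e) (at x within S)"
    proof eventually_elim
      case (elim y)
      have g: "g y \<ge> 0" unfolding g_def by (auto intro: sum_nonneg)
      have "dist (f y) (f x) \<le> L * g y" using H[OF elim(2) x] by (simp add: g_def)
      also have "\<dots> \<le> \<bar>L\<bar> * g y" using g by (intro mult_right_mono) auto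
      also have "\<dots> \<le> (\<bar>L\<bar> + 1) * g y" using g by (intro mult_right_mono) auto
      also have "\<dots> < (\<bar>L\<bar> + 1) * (e / (\<bar>L\<bar> + 1))" using elim(1) by (intro mult_strict_left_mono) auto
      also have "\<dots> = e" by simp
      finally show ?case .
    qed
  qed
qed

lemma compact_cube: "compact cube"
proof -
  have "cube = PiE UNIV (\<lambda>_. {0..1::real})" unfolding cube_def by (auto simp: PiE_def Pi_def)
  moreover have "compactin (product_topology (\<lambda>_. euclidean) UNIV) (PiE UNIV (\<lambda>_. {0..1::real}))"
    by (simp add: compactin_PiE)
  ultimately show ?thesis by (metis compactin_euclidean_iff euclidean_product_topology)
qed

lemma cont_wt: "continuous_on UNIV (wt N i)"
  unfolding wt_def by (cases "i = 0") (simp_all, (intro continuous_intros continuous_on_product_coordinates)+)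

lemma compact_wt0: "compact {x \<in> cube. wt N i x = 0}"
proof -
  have "closed {x. wt N i x = 0}" by (rule closed_Collect_eq[OF cont_wt]) simp
  then have "compact (cube \<inter> {x. wt N i x = 0})" by (intro compact_Int_closed compact_cube)
  then show ?thesis by (simp add: Int_def)
qed

context cls
begin

lemma Ep_cont: "continuous_on cube (Ep a N)"
  by (rule lip_cont[OF Ep_lip])

lemma compact_F: "compact (Fset a N i)"
  unfolding Fset_def
  by (rule compact_continuous_image[OF continuous_on_subset[OF Ep_cont] compact_wt0]) auto

lemma compact_K: "compact (Ep a N ` cube)"
  by (rule compact_continuous_image[OF Ep_cont compact_cube])

lemma exseq:
  assumes nonsep: "\<And>D :: 'a set. countable D \<Longrightarrow> \<exists>w. w \<notin> closure D"
  shows "\<exists>a. \<forall>k. 1 \<le> k \<and> k \<le> N \<longrightarrow> a k \<notin> Sset (Ep a (k - 1) ` cube)"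
proof (induction N)
  case 0 then show ?case by auto
next
  case (Suc N)
  then obtain a where a: "\<forall>k. 1 \<le> k \<and> k \<le> N \<longrightarrow> a k \<notin> Sset (Ep a (k - 1) ` cube)" by blast
  obtain D where D: "countable D" "Sset (Ep a N ` cube) \<subseteq> closure D" using S_sep by blast
  obtain w where w: "w \<notin> closure D" using nonsep[OF D(1)] by blast
  define a' where "a' = a(Suc N := w)"
  have E: "Ep a' m ` cube = Ep a m ` cube" if "m \<le> N" for m
    using that by (intro image_cong refl Ep_cong) (auto simp: a'_def)
  have "a' k \<notin> Sset (Ep a' (k - 1) ` cube)" if "1 \<le> k" "k \<le> Suc N" for k
  proof (cases "k = Suc N")
    case True
    then show ?thesis using E[of N] w D by (auto simp: a'_def)
  next
    case False
    then show ?thesis using E[of "k - 1"] a that by (auto simp: a'_def)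
  qed
  then show ?case by blast
qed

end


context cls
begin

lemma no_dim:
  assumes a: "\<forall>k. 1 \<le> k \<and> k \<le> Suc n \<longrightarrow> a k \<notin> Sset (Ep a (k - 1) ` cube)"
    and dim: "covering_dim_le (euclidean :: 'a topology) n"
  shows False
proof -
  define N where "N = Suc n"
  have Fe: "\<And>y. \<exists>i\<le>N. y \<notin> Fset a N i"
    by (rule F_empty) (use a in \<open>auto simp: N_def\<close>)
  define \<U> where "\<U> = (\<lambda>i. - Fset a N i) ` {..N}"
  have U1: "finite \<U>" unfolding \<U>_def by simp
  have U2: "\<forall>U\<in>\<U>. openin euclidean U" unfolding \<U>_def
    by (auto intro!: open_Compl compact_imp_closed compact_F)
  have U3: "\<Union>\<U> = topspace euclidean" unfolding \<U>_def using Fe by auto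
  obtain \<V> where V: "finite \<V>" "\<forall>V\<in>\<V>. openin euclidean V" "\<Union>\<V> = topspace euclidean"
    "\<forall>V\<in>\<V>. \<exists>U\<in>\<U>. V \<subseteq> U" "\<forall>x\<in>topspace euclidean. card {V\<in>\<V>. x \<in> V} \<le> n + 1"
  proof -
    from dim have "finite \<U> \<and> (\<forall>U\<in>\<U>. openin euclidean U) \<and> \<Union>\<U> = topspace euclidean \<longrightarrow>
        (\<exists>\<V>. finite \<V> \<and> (\<forall>V\<in>\<V>. openin euclidean V) \<and> \<Union>\<V> = topspace euclidean \<and>
             (\<forall>V\<in>\<V>. \<exists>U\<in>\<U>. V \<subseteq> U) \<and>
             (\<forall>x\<in>topspace euclidean. card {V\<in>\<V>. x \<in> V} \<le> n + 1))"
      unfolding covering_dim_le_def by (rule spec)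
    then have "\<exists>\<V>. finite \<V> \<and> (\<forall>V\<in>\<V>. openin euclidean V) \<and> \<Union>\<V> = topspace euclidean \<and>
             (\<forall>V\<in>\<V>. \<exists>U\<in>\<U>. V \<subseteq> U) \<and>
             (\<forall>x\<in>topspace euclidean. card {V\<in>\<V>. x \<in> V} \<le> n + 1)"
      by (rule mp) (use U1 U2 U3 in auto)
    then show ?thesis by (elim exE conjE) (rule that; assumption)
  qed
  obtain \<eta> where \<eta>: "\<eta> > 0" "\<And>y. y \<in> Ep a N ` cube \<Longrightarrow> \<exists>V\<in>\<V>. ball y \<eta> \<subseteq> V"
    using Heine_Borel_lemma[OF compact_K[of a N], of "\<V>"] V by auto
  obtain m :: nat where m: "2 * C * N / \<eta> < m" using reals_Archimedean2 by blast
  define p where "p = Suc m"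
  have p: "p > 0" "2 * C * N / p < \<eta>"
  proof -
    show "p > 0" by (simp add: p_def)
    have "2 * C * N < \<eta> * m" using m \<eta>(1) by (simp add: field_simps)
    also have "\<dots> \<le> \<eta> * p" using \<eta>(1) by (simp add: p_def)
    finally show "2 * C * N / p < \<eta>" by (simp add: p_def field_simps)
  qed
  define r where "r q = (\<lambda>k. real (q (N - 1 - k)) / real p)" for q :: "nat \<Rightarrow> nat"
  define grid where "grid q \<longleftrightarrow> (\<forall>j. q j \<le> p)" for q :: "nat \<Rightarrow> nat"
  have rc: "r q \<in> cube" if "grid q" for q
    using that p(1) unfolding r_def grid_def cube_def by (auto simp: field_simps)
  define Vf where "Vf q = (SOME V. V \<in> \<V> \<and> ball (Ep a N (r q)) \<eta> \<subseteq> V)" for q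
  have Vf: "Vf q \<in> \<V> \<and> ball (Ep a N (r q)) \<eta> \<subseteq> Vf q" if "grid q" for q
  proof -
    have "\<exists>V. V \<in> \<V> \<and> ball (Ep a N (r q)) \<eta> \<subseteq> V"
      using \<eta>(2)[of "Ep a N (r q)"] rc[OF that] by blast
    then show ?thesis unfolding Vf_def by (rule someI_ex)
  qed
  define \<iota> where "\<iota> V = (SOME i. i \<le> N \<and> V \<subseteq> - Fset a N i)" for V
  have \<iota>: "\<iota> V \<le> N \<and> V \<subseteq> - Fset a N (\<iota> V)" if "V \<in> \<V>" for V
  proof -
    have "\<exists>U\<in>\<U>. V \<subseteq> U" using V(4) that by (rule bspec)
    then obtain U where U: "U \<in> \<U>" "V \<subseteq> U" by (rule bexE)
    from U(1) obtain i where "i \<in> {..N}" "U = - Fset a N i" unfolding \<U>_def by (rule imageE)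
    then have "\<exists>i. i \<le> N \<and> V \<subseteq> - Fset a N i" using U(2) by (intro exI[of _ i]) simp
    then show ?thesis unfolding \<iota>_def by (rule someI_ex[of "\<lambda>i. i \<le> N \<and> V \<subseteq> - Fset a N i"])
  qed
  define lv where "lv q = N - \<iota> (Vf q)" for q
  have KF: "wt N (\<iota> (Vf q)) (r q) \<noteq> 0" if "grid q" for q
  proof
    assume "wt N (\<iota> (Vf q)) (r q) = 0"
    then have "Ep a N (r q) \<in> Fset a N (\<iota> (Vf q))" unfolding Fset_def using rc[OF that] by auto
    moreover have "Ep a N (r q) \<in> Vf q" using Vf[OF that] \<eta>(1) centre_in_ball by blast
    moreover have "Vf q \<subseteq> - Fset a N (\<iota> (Vf q))" using \<iota>[of "Vf q"] Vf[OF that] by blast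
    ultimately show False by blast
  qed
  have \<iota>N: "\<iota> (Vf q) \<le> N" if "grid q" for q using \<iota> Vf that by blast
  define lab where "lab q j = (if j < lv q then 0 else if j = lv q then 1 else if q j = p then 1 else (0::nat))" for q j
  have c1: "lab x j = 0" if "\<forall>j. x j \<le> p" "j < N" "x j = 0" for x j
  proof -
    have g: "grid x" using that by (simp add: grid_def)
    have "j \<noteq> lv x"
    proof
      assume j: "j = lv x"
      define i where "i = \<iota> (Vf x)"
      have i: "i \<le> N" "j = N - i" using \<iota>N[OF g] j by (auto simp: i_def lv_def)
      then have "i \<noteq> 0" using that(2) by auto
      have "N - 1 - (i - 1) = j" using i \<open>i \<noteq> 0\<close> by auto
      then have "r x (i - 1) = 0" using that(3) by (simp add: r_def)
      then have "wt N i (r x) = 0" using \<open>i \<noteq> 0\<close> by (simp add: wt_def)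
      then show False using KF[OF g] by (simp add: i_def)
    qed
    then show ?thesis using that p(1) by (auto simp: lab_def)
  qed
  have c2: "lab x j = 1" if "\<forall>j. x j \<le> p" "j < N" "x j = p" for x j
  proof -
    have g: "grid x" using that by (simp add: grid_def)
    have "\<not> j < lv x"
    proof
      assume j: "j < lv x"
      define i where "i = \<iota> (Vf x)"
      have i: "i \<le> N" "lv x = N - i" using \<iota>N[OF g] by (auto simp: i_def lv_def)
      define k0 where "k0 = N - 1 - j"
      have k0: "k0 \<in> {i..<N}" using i j that(2) by (auto simp: k0_def)
      have "N - 1 - k0 = j" using that(2) by (auto simp: k0_def)
      then have "1 - r x k0 = 0" using that(3) p(1) by (simp add: r_def)
      then have "(\<Prod>k\<in>{i..<N}. 1 - r x k) = 0" using k0 by (intro prod_zero) auto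
      then have "wt N i (r x) = 0" by (simp add: wt_def)
      then show False using KF[OF g] by (simp add: i_def)
    qed
    then show ?thesis using that by (auto simp: lab_def)
  qed
  have "odd (card {s. ksimplex p N s \<and> (reduced N \<circ> lab) ` s = {..N}})"
    by (rule kuhn_combinatorial) (use p(1) c1 c2 in auto)
  then have "{s. ksimplex p N s \<and> (reduced N \<circ> lab) ` s = {..N}} \<noteq> {}"
    by (rule odd_card_imp_not_empty)
  then obtain s where s: "ksimplex p N s" "(reduced N \<circ> lab) ` s = {..N}" by blast
  then obtain b u where ks: "kuhn_simplex p N b u s" by (auto elim: ksimplex.cases)
  interpret ks: kuhn_simplex p N b u s by (fact ks)
  have gs: "grid v" if "v \<in> s" for v using ks.s_le_p[OF that] by (simp add: grid_def)
  have red: "reduced N (lab v) = lv v" if "v \<in> s" for v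
  proof -
    have lN: "lv v \<le> N" by (simp add: lv_def)
    show ?thesis unfolding reduced_def
    proof (rule Least_equality)
      show "lv v = N \<or> lab v (lv v) \<noteq> 0" by (auto simp: lab_def)
      show "lv v \<le> y" if "y = N \<or> lab v y \<noteq> 0" for y
        using that lN by (auto simp: lab_def split: if_splits)
    qed
  qed
  define z where "z = Ep a N (r b)"
  have zin: "z \<in> Vf v" if "v \<in> s" for v
  proof -
    have "dist (Ep a N (r v)) z \<le> 2 * C * (\<Sum>k<N. \<bar>r v k - r b k\<bar>)"
      unfolding z_def by (rule Ep_lip[OF rc rc]) (use gs that ks.base_in_s in auto)
    also have "\<dots> \<le> 2 * C * (\<Sum>k<N. 1 / p)"
    proof (intro mult_left_mono sum_mono)
      fix k
      have "b (N - 1 - k) \<le> v (N - 1 - k)" "v (N - 1 - k) \<le> Suc (b (N - 1 - k))"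
        using ks.base_le[OF that] ks.le_Suc_base[OF that] by auto
      then have "\<bar>real (v (N - 1 - k)) - real (b (N - 1 - k))\<bar> \<le> 1" by linarith
      then show "\<bar>r v k - r b k\<bar> \<le> 1 / p" using p(1)
        by (simp add: r_def diff_divide_distrib[symmetric] abs_divide divide_right_mono)
    qed (use C(1) in auto)
    also have "\<dots> = 2 * C * N / p" by simp
    also have "\<dots> < \<eta>" by (rule p(2))
    finally show ?thesis using Vf[OF gs[OF that]] by (auto simp: dist_commute)
  qed
  have "{..N} = (\<lambda>V. N - \<iota> V) ` (Vf ` s)"
    using s(2) red by (force simp: lv_def image_comp)
  moreover have "finite (Vf ` s)" by (simp add: ks.s_eq)
  ultimately have "card {..N} \<le> card (Vf ` s)" by (metis card_image_le)
  also have "\<dots> \<le> card {V \<in> \<V>. z \<in> V}"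
    by (rule card_mono) (use V(1) Vf gs zin in auto)
  also have "\<dots> \<le> n + 1" using V(5) by auto
  finally show False by (simp add: N_def)
qed

end


theorem theorem2p9:
  fixes \<gamma> :: "nat \<Rightarrow> (nat \<Rightarrow> real) \<Rightarrow> (nat \<Rightarrow> 'a::metric_space) \<Rightarrow> 'a"
  assumes "bounded (UNIV :: 'a set)"
    and "complete (UNIV :: 'a set)"
    and "convex_like_structure \<gamma>"
    and "finite_covering_dim (euclidean :: 'a topology)"
  shows "second_countable (euclidean :: 'a topology)"
proof (rule ccontr)
  assume nsc: "\<not> second_countable (euclidean :: 'a topology)"
  interpret cls \<gamma> by (unfold_locales) (rule assms(3))
  have nonsep: "\<exists>w. w \<notin> closure D" if "countable D" for D :: "'a set"
  proof (rule ccontr)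
    assume "\<not> (\<exists>w. w \<notin> closure D)"
    then have "closure D = UNIV" by auto
    then show False using sep_imp_second_countable[OF that] nsc by blast
  qed
  obtain n where dim: "covering_dim_le (euclidean :: 'a topology) n"
    using assms(4) unfolding finite_covering_dim_def by blast
  obtain a where "\<forall>k. 1 \<le> k \<and> k \<le> Suc n \<longrightarrow> a k \<notin> Sset (Ep a (k - 1) ` cube)"
    using exseq[OF nonsep] by blast
  then show False using no_dim dim by blast
qed

end
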